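(* Let $\Lambda\subset\mathbb{Z}^n$ be an antichain lattice and $A\subset\mathbb{Z}^n$ a generic $\Lambda$-finite set. Then the algebraic Scarf complex $\mathcal{F}_{N(A)}$ is isomorphic to a subcomplex of the hull complex $\mathrm{hull}(A)$; that is, for all sufficiently large $t$, for every $\sigma\in N(A)$ the set $\mathrm{conv}(E_t(\sigma))$ is a face of $\mathcal{P}_t(A)$, and $\sigma\mapsto E_t(\sigma)$ identifies $N(A)$ (with labels $\vee\sigma$) with a labeled subcomplex of $\mathrm{hull}(A)$.
   Context: Notation: $\le$, $\ll$, $\vee$ componentwise on $\mathbb{Z}^n$; antichain lattice = subgroup of $\mathbb{Z}^n$ whose distinct elements are pairwise incomparable. $T_\eta=\eta-\mathbb{N}^n$, $T^o_\eta=\{\beta:\beta\ll\eta\}$; the $X$-face ($\emptyset\neq X\subseteq[n]$) of $T_\eta$ is $\{\alpha\in T_\eta:\alpha_i=\eta_i\ \forall i\in X\}$. $A$ is generic if whenever $T^o_\eta\cap A=\emptyset$, each face of $T_\eta$ contains at most one point of $A$. $A$ is $\Lambda$-finite if $A=A+\Lambda$ and $A=A_0+\Lambda$ for a finite $A_0$. A finite nonempty $B\subseteq A$ is strongly neighborly if $B'\subseteq A$, $\vee B'=\vee B$ imply $B'=B$; $N(A)$ is the simplicial complex of strongly neighborly sets, each face $\sigma$ labeled by $\vee\sigma$. The algebraic Scarf complex $\mathcal{F}_{N(A)}$: free $S=k[x_1,\dots,x_n]$-modules with bases $\{e_\sigma:\sigma\in N(A),|\sigma|=i+1\}$ and differential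 $e_\sigma\mapsto\sum_j(-1)^jX^{\vee\sigma-\vee\partial_j\sigma}e_{\partial_j\sigma}$. For real $t>1$ and $\alpha\in\mathbb{Z}^n$, $E_t(\alpha)=(t^{\alpha_1},\dots,t^{\alpha_n})$, $E_t(F)=\{E_t(\alpha):\alpha\in F\}$, $\mathcal{P}_t(A)=\mathbb{R}^n_{\ge0}+\mathrm{conv}(E_t(A))$. $\mathrm{hull}_t(A)$ is the collection of $F\subseteq A$ such that $\mathrm{conv}(E_t(F))$ is a face of $\mathcal{P}_t(A)$ (labeled by $\vee F$); for generic $A$ this is independent of $t$ for $t$ large, and $\mathrm{hull}(A)$ denotes this stable complex. *)

theory Defs
  imports "HOL-Analysis.Analysis"
begin

text \<open>Points of Z^n are modelled as int ^ 'n (n = CARD('n)).\<close>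

definition cle :: "int ^ 'n \<Rightarrow> int ^ 'n \<Rightarrow> bool" where
  "cle a b \<longleftrightarrow> (\<forall>i. a $ i \<le> b $ i)"

definition cll :: "int ^ 'n \<Rightarrow> int ^ 'n \<Rightarrow> bool" where
  "cll a b \<longleftrightarrow> (\<forall>i. a $ i < b $ i)"

definition vee :: "(int ^ 'n) set \<Rightarrow> int ^ 'n" where
  "vee B = (\<chi> i. Max ((\<lambda>b. b $ i) ` B))"

definition antichain_lattice :: "(int ^ 'n) set \<Rightarrow> bool" where
  "antichain_lattice L \<longleftrightarrow>
     0 \<in> L \<and> (\<forall>a\<in>L. \<forall>b\<in>L. a + b \<in> L) \<and> (\<forall>a\<in>L. - a \<in> L) \<and>
     (\<forall>a\<in>L. \<forall>b\<in>L. a \<noteq> b \<longrightarrow> \<not> cle a b)"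

definition Tcone :: "int ^ 'n \<Rightarrow> (int ^ 'n) set" where
  "Tcone \<eta> = {\<alpha>. cle \<alpha> \<eta>}"

definition Topen :: "int ^ 'n \<Rightarrow> (int ^ 'n) set" where
  "Topen \<eta> = {\<beta>. cll \<beta> \<eta>}"

definition Tface :: "int ^ 'n \<Rightarrow> 'n set \<Rightarrow> (int ^ 'n) set" where
  "Tface \<eta> X = {\<alpha> \<in> Tcone \<eta>. \<forall>i\<in>X. \<alpha> $ i = \<eta> $ i}"

definition generic :: "(int ^ 'n) set \<Rightarrow> bool" where
  "generic A \<longleftrightarrow> (\<forall>\<eta>. Topen \<eta> \<inter> A = {} \<longrightarrow>
      (\<forall>X. X \<noteq> {} \<longrightarrow> (\<forall>a\<in>Tface \<eta> X \<inter> A. \<forall>b\<in>Tface \<eta> X \<inter> A. a = b)))"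

definition lattice_finite :: "(int ^ 'n) set \<Rightarrow> (int ^ 'n) set \<Rightarrow> bool" where
  "lattice_finite L A \<longleftrightarrow>
     A = {a + l | a l. a \<in> A \<and> l \<in> L} \<and>
     (\<exists>A0. finite A0 \<and> A = {a + l | a l. a \<in> A0 \<and> l \<in> L})"

definition strongly_neighborly :: "(int ^ 'n) set \<Rightarrow> (int ^ 'n) set \<Rightarrow> bool" where
  "strongly_neighborly A B \<longleftrightarrow> finite B \<and> B \<noteq> {} \<and> B \<subseteq> A \<and>
     (\<forall>B'. finite B' \<and> B' \<noteq> {} \<and> B' \<subseteq> A \<and> vee B' = vee B \<longrightarrow> B' = B)"

definition NA :: "(int ^ 'n) set \<Rightarrow> (int ^ 'n) set set" where
  "NA A = {B. strongly_neighborly A B}"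

definition Et :: "real \<Rightarrow> int ^ 'n \<Rightarrow> real ^ 'n" where
  "Et t \<alpha> = (\<chi> i. t powr (real_of_int (\<alpha> $ i)))"

definition Pt :: "real \<Rightarrow> (int ^ 'n) set \<Rightarrow> (real ^ 'n) set" where
  "Pt t A = {x + y | x y. (\<forall>i. 0 \<le> x $ i) \<and> y \<in> convex hull (Et t ` A)}"

definition hull_t :: "real \<Rightarrow> (int ^ 'n) set \<Rightarrow> (int ^ 'n) set set" where
  "hull_t t A = {F. F \<subseteq> A \<and> (convex hull (Et t ` F)) face_of (Pt t A)}"

end

theory Submission
  imports Defs
begin

lemma arith1: fixes N t X :: real assumes N: "N \<ge> 1" and t: "16*N^2 + 2 \<le> t" and X: "X \<le> N*(1 + N*(2/t + X/t))" "X\<ge>0" shows "X \<le> 2*N"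
proof -
  have tp: "t > 0" using t by (smt (verit) zero_le_power2)
  have u: "N^2/t \<le> 1/16" using t tp by (simp add: divide_le_eq)
  have u0: "N^2/t \<ge> 0" using tp by simp
  have e: "N*(1 + N*(2/t+X/t)) = N + 2*(N^2/t) + (N^2/t)*X" by (simp add: field_simps power2_eq_square)
  have "(N^2/t)*X \<le> (1/16)*X" using u X(2) by (rule mult_right_mono)
  then show ?thesis using X e u N by linarith
qed
lemma arith2: fixes N t X :: real assumes N: "N \<ge> 1" and t: "16*N^2 + 2 \<le> t" and X: "X \<le> 2*N" "X\<ge>0" shows "1 - N*(2/t + X/t) > 1/t"
proof -
  have tp: "t > 0" using t by (smt (verit) zero_le_power2)
  have u: "N^2/t \<le> 1/16" using t tp by (simp add: divide_le_eq)
  have NN: "N \<le> N^2" using N by (simp add: power2_eq_square)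
  have v: "N/t \<le> N^2/t" using NN tp by (simp add: divide_right_mono)
  have w: "1/t \<le> 1/18" using t tp N by (simp add: divide_le_eq) (smt (verit) one_le_power)
  have "N*X/t \<le> N*(2*N)/t" using X N tp by (simp add: divide_right_mono)
  moreover have "N*(2*N)/t = 2*(N^2/t)" by (simp add: power2_eq_square)
  moreover have "N*(2/t + X/t) = 2*(N/t) + N*X/t" by (simp add: field_simps)
  ultimately show ?thesis using u v w by linarith
qed


lemma vee_nth: "vee B $ i = Max ((\<lambda>b. b $ i) ` B)"
  by (simp add: vee_def)

lemma sn_le:
  assumes "strongly_neighborly A \<sigma>" "a \<in> \<sigma>"
  shows "cle a (vee \<sigma>)"
  using assms by (auto simp: strongly_neighborly_def cle_def vee_nth)

lemma sn_below:
  assumes sn: "strongly_neighborly A \<sigma>" and b: "b \<in> A" "cle b (vee \<sigma>)"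
  shows "b \<in> \<sigma>"
proof -
  have fin: "finite \<sigma>" "\<sigma> \<noteq> {}" "\<sigma> \<subseteq> A" using sn by (auto simp: strongly_neighborly_def)
  have "vee (insert b \<sigma>) = vee \<sigma>"
  proof (rule vec_eq_iff[THEN iffD2, rule_format])
    fix i
    have "vee (insert b \<sigma>) $ i = max (b $ i) (Max ((\<lambda>b. b $ i) ` \<sigma>))"
      using fin by (simp add: vee_nth Max_insert)
    also have "\<dots> = vee \<sigma> $ i" using b(2) by (simp add: cle_def vee_nth max_def)
    finally show "vee (insert b \<sigma>) $ i = vee \<sigma> $ i" .
  qed
  then have "insert b \<sigma> = \<sigma>"
    using sn fin b(1) unfolding strongly_neighborly_def by blast
  then show ?thesis by blast
qed

lemma sn_touch:
  assumes sn: "strongly_neighborly A \<sigma>" and a: "a \<in> \<sigma>"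
  shows "\<exists>i. a $ i = vee \<sigma> $ i"
proof (rule ccontr)
  assume "\<not> ?thesis"
  then have lt: "\<And>i. a $ i < vee \<sigma> $ i" using sn_le[OF sn a] by (force simp: cle_def order_le_less)
  have fin: "finite \<sigma>" "\<sigma> \<noteq> {}" "\<sigma> \<subseteq> A" using sn by (auto simp: strongly_neighborly_def)
  have att: "\<exists>b\<in>\<sigma> - {a}. b $ i = vee \<sigma> $ i" for i
  proof -
    have "vee \<sigma> $ i \<in> (\<lambda>b. b $ i) ` \<sigma>" unfolding vee_nth using fin by (intro Max_in) auto
    then obtain b where "b \<in> \<sigma>" "b $ i = vee \<sigma> $ i" by auto
    with lt[of i] show ?thesis by auto
  qed
  have ne: "\<sigma> - {a} \<noteq> {}" using att[of undefined] by auto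
  have "vee (\<sigma> - {a}) = vee \<sigma>"
  proof (rule vec_eq_iff[THEN iffD2, rule_format])
    fix i
    obtain b where b: "b \<in> \<sigma> - {a}" "b $ i = vee \<sigma> $ i" using att by blast
    have "vee (\<sigma> - {a}) $ i \<le> vee \<sigma> $ i"
      unfolding vee_nth using fin ne by (intro Max_mono) auto
    moreover have "b $ i \<le> vee (\<sigma> - {a}) $ i"
      unfolding vee_nth using fin(1) b(1) by (intro Max_ge) auto
    ultimately show "vee (\<sigma> - {a}) $ i = vee \<sigma> $ i" using b by simp
  qed
  then have "\<sigma> - {a} = \<sigma>" using sn fin ne unfolding strongly_neighborly_def
    by (meson Diff_subset finite_Diff subset_trans)
  with a show False by blast
qed

lemma sn_uniq:
  assumes gen: "generic A" and sn: "strongly_neighborly A \<sigma>"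
    and a: "a \<in> \<sigma>" "a' \<in> \<sigma>" and i: "a $ i = vee \<sigma> $ i" "a' $ i = vee \<sigma> $ i"
  shows "a = a'"
proof -
  have sub: "\<sigma> \<subseteq> A" using sn by (auto simp: strongly_neighborly_def)
  have "Topen (vee \<sigma>) \<inter> A = {}"
  proof (rule ccontr)
    assume "\<not> ?thesis"
    then obtain b where b: "b \<in> A" "cll b (vee \<sigma>)" by (auto simp: Topen_def)
    then have "cle b (vee \<sigma>)" by (auto simp: cle_def cll_def less_imp_le)
    then have "b \<in> \<sigma>" using sn_below[OF sn b(1)] by blast
    then obtain j where "b $ j = vee \<sigma> $ j" using sn_touch[OF sn] by blast
    with b(2) show False unfolding cll_def by (metis less_irrefl)
  qed
  moreover have "a \<in> Tface (vee \<sigma>) {i} \<inter> A" "a' \<in> Tface (vee \<sigma>) {i} \<inter> A"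
    using a i sub sn_le[OF sn] by (auto simp: Tface_def Tcone_def)
  ultimately show ?thesis using gen unfolding generic_def by blast
qed



lemma Pt_convex: "convex (Pt t (A :: (int^'n) set))"
proof (rule convexI)
  fix u v :: "real^'n" and a b :: real
  assume u: "u \<in> Pt t A" and v: "v \<in> Pt t A" and ab: "0 \<le> a" "0 \<le> b" "a + b = 1"
  obtain x1 y1 where 1: "u = x1 + y1" "\<forall>i. 0 \<le> x1 $ i" "y1 \<in> convex hull (Et t ` A)"
    using u by (auto simp: Pt_def)
  obtain x2 y2 where 2: "v = x2 + y2" "\<forall>i. 0 \<le> x2 $ i" "y2 \<in> convex hull (Et t ` A)"
    using v by (auto simp: Pt_def)
  have "a *\<^sub>R u + b *\<^sub>R v = (a *\<^sub>R x1 + b *\<^sub>R x2) + (a *\<^sub>R y1 + b *\<^sub>R y2)"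
    using 1 2 by (simp add: algebra_simps)
  moreover have "\<forall>i. 0 \<le> (a *\<^sub>R x1 + b *\<^sub>R x2) $ i" using 1 2 ab by simp
  moreover have "a *\<^sub>R y1 + b *\<^sub>R y2 \<in> convex hull (Et t ` A)"
    using 1 2 ab by (intro convexD[OF convex_convex_hull]) auto
  ultimately show "a *\<^sub>R u + b *\<^sub>R v \<in> Pt t A" unfolding Pt_def by blast
qed

lemma face_from_w:
  fixes w :: "real^'n"
  assumes pos: "\<forall>i. 0 < w $ i" and eq1: "\<forall>a\<in>\<sigma>. w \<bullet> Et t a = 1"
    and gt1: "\<forall>b\<in>A - \<sigma>. w \<bullet> Et t b > 1" and sub: "\<sigma> \<subseteq> A"
  shows "convex hull (Et t ` \<sigma>) face_of Pt t A"
proof -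
  have ge1A: "\<forall>b\<in>A. w \<bullet> Et t b \<ge> 1" using eq1 gt1 by force
  have hullge: "convex hull (Et t ` A) \<subseteq> {y. w \<bullet> y \<ge> 1}"
    by (rule hull_minimal) (use ge1A convex_halfspace_ge in auto)
  have nonneg: "w \<bullet> x \<ge> 0" if "\<forall>i. 0 \<le> x $ i" for x :: "real^'n"
    unfolding inner_vec_def using pos that by (intro sum_nonneg) (simp add: less_imp_le)
  have PtGe: "\<And>z. z \<in> Pt t A \<Longrightarrow> w \<bullet> z \<ge> 1"
  proof -
    fix z assume "z \<in> Pt t A"
    then obtain x y where "z = x + y" "\<forall>i. 0 \<le> x $ i" "y \<in> convex hull (Et t ` A)"
      by (auto simp: Pt_def)
    with nonneg hullge show "w \<bullet> z \<ge> 1" by (force simp: inner_add_right)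
  qed
  have eq: "Pt t A \<inter> {z. w \<bullet> z = 1} = convex hull (Et t ` \<sigma>)"
  proof
    show "convex hull (Et t ` \<sigma>) \<subseteq> Pt t A \<inter> {z. w \<bullet> z = 1}"
    proof
      fix y assume y: "y \<in> convex hull (Et t ` \<sigma>)"
      have "convex hull (Et t ` \<sigma>) \<subseteq> convex hull (Et t ` A)"
        using sub by (intro hull_mono image_mono)
      with y have "y \<in> Pt t A" unfolding Pt_def
        by (intro CollectI exI[of _ 0] exI[of _ y]) auto
      moreover have "convex hull (Et t ` \<sigma>) \<subseteq> {z. w \<bullet> z = 1}"
        by (rule hull_minimal) (use eq1 convex_hyperplane in auto)
      ultimately show "y \<in> Pt t A \<inter> {z. w \<bullet> z = 1}" using y by blast
    qed
  next
    show "Pt t A \<inter> {z. w \<bullet> z = 1} \<subseteq> convex hull (Et t ` \<sigma>)"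
    proof
      fix z assume z: "z \<in> Pt t A \<inter> {z. w \<bullet> z = 1}"
      then obtain x y where xy: "z = x + y" "\<forall>i. 0 \<le> x $ i" "y \<in> convex hull (Et t ` A)"
        by (auto simp: Pt_def)
      have wx: "w \<bullet> x \<ge> 0" using nonneg xy by blast
      have wy: "w \<bullet> y \<ge> 1" using hullge xy by blast
      have "w \<bullet> x + w \<bullet> y = 1" using z xy by (simp add: inner_add_right)
      then have wx0: "w \<bullet> x = 0" and wy1: "w \<bullet> y = 1" using wx wy by linarith+
      have "\<forall>i\<in>UNIV. w $ i * x $ i = 0"
        using wx0 unfolding inner_vec_def
        by (subst sum_nonneg_eq_0_iff[symmetric]) (use pos xy in \<open>auto intro: mult_nonneg_nonneg less_imp_le\<close>)
      then have "x = 0" using pos by (simp add: vec_eq_iff) (metis less_irrefl)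
      then have zy: "z = y" using xy by simp
      obtain S u where S: "finite S" "S \<subseteq> Et t ` A" "\<forall>v\<in>S. 0 \<le> u v" "sum u S = 1"
        "sum (\<lambda>v. u v *\<^sub>R v) S = y"
        using xy(3) unfolding convex_hull_explicit by blast
      have Sge: "\<forall>v\<in>S. w \<bullet> v \<ge> 1" using S(2) ge1A by blast
      have supp: "\<forall>v\<in>S. u v \<noteq> 0 \<longrightarrow> v \<in> Et t ` \<sigma>"
      proof (rule ccontr)
        assume "\<not> ?thesis"
        then obtain v0 where v0: "v0 \<in> S" "u v0 \<noteq> 0" "v0 \<notin> Et t ` \<sigma>" by blast
        then obtain b where b: "b \<in> A" "v0 = Et t b" using S(2) by blast
        with v0 have "b \<in> A - \<sigma>" by blast
        then have "w \<bullet> v0 > 1" using gt1 b by blast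
        moreover have "u v0 > 0" using v0 S(3) by force
        ultimately have "u v0 < u v0 * (w \<bullet> v0)" by simp
        moreover have "\<forall>v\<in>S. u v \<le> u v * (w \<bullet> v)"
          using S(3) Sge by (metis mult.right_neutral mult_left_mono)
        ultimately have "sum u S < sum (\<lambda>v. u v * (w \<bullet> v)) S"
          using S(1) v0(1) by (intro sum_strict_mono_ex1) auto
        moreover have "sum (\<lambda>v. u v * (w \<bullet> v)) S = w \<bullet> y"
          unfolding S(5)[symmetric] by (simp add: inner_sum_right)
        ultimately show False using S(4) wy1 by simp
      qed
      define S' where "S' = S \<inter> Et t ` \<sigma>"
      have "sum u S' = 1" using S(1,4) supp unfolding S'_def
        by (metis (no_types, lifting) DiffE IntI inf_le1 sum.mono_neutral_right)
      moreover have "sum (\<lambda>v. u v *\<^sub>R v) S' = y" using S(1,5) supp unfolding S'_def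
        by (subst S(5)[symmetric]) (rule sum.mono_neutral_right[symmetric]; auto)
      moreover have "finite S'" "S' \<subseteq> Et t ` \<sigma>" "\<forall>v\<in>S'. 0 \<le> u v"
        using S unfolding S'_def by auto
      ultimately have "y \<in> convex hull (Et t ` \<sigma>)" unfolding convex_hull_explicit by blast
      then show "z \<in> convex hull (Et t ` \<sigma>)" using zy by simp
    qed
  qed
  have "(Pt t A \<inter> {z. w \<bullet> z = 1}) face_of Pt t A"
    by (rule face_of_Int_supporting_hyperplane_ge[OF Pt_convex]) (use PtGe in auto)
  then show ?thesis using eq by simp
qed



lemma exists_w:
  fixes \<sigma> A :: "(int^'n) set" and \<eta> :: "int^'n" and t :: real
  assumes fin: "finite \<sigma>"
  and le: "\<forall>a\<in>\<sigma>. cle a \<eta>"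
  and below: "\<forall>b\<in>A. cle b \<eta> \<longrightarrow> b \<in> \<sigma>"
  and touch: "\<forall>a\<in>\<sigma>. \<exists>i. a$i = \<eta>$i"
  and uniq: "\<forall>a\<in>\<sigma>. \<forall>a'\<in>\<sigma>. \<forall>i. a$i = \<eta>$i \<longrightarrow> a'$i = \<eta>$i \<longrightarrow> a = a'"
  and t: "t \<ge> 16 * real CARD('n)^2 + 2"
  shows "\<exists>w::real^'n. (\<forall>i. 0 < w$i) \<and> (\<forall>a\<in>\<sigma>. w \<bullet> Et t a = 1) \<and> (\<forall>b\<in>A-\<sigma>. w \<bullet> Et t b > 1)"
proof -
  define N where "N = real CARD('n)"
  have N1: "N \<ge> 1" unfolding N_def by (simp add: Suc_leI)
  have t16: "16 * N^2 + 2 \<le> t" using t unfolding N_def .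
  have tp: "t > 0" using t16 by (smt (verit) zero_le_power2)
  have t1: "t > 1" using t16 by (smt (verit) zero_le_power2)
  have NNt: "N * N / t \<le> 1/2"
  proof -
    have "0 \<le> N * N" by simp
    then have "N * N \<le> t / 2" using t16 unfolding power2_eq_square by linarith
    then show ?thesis using tp by (simp add: divide_le_eq)
  qed
  define p where "p a = (SOME i. a$i = \<eta>$i)" for a :: "int^'n"
  have pa: "a$(p a) = \<eta>$(p a)" if "a \<in> \<sigma>" for a
    unfolding p_def using touch that by (metis (mono_tags, lifting) someI_ex)
  have pinj: "inj_on p \<sigma>"
    using uniq pa by (metis inj_onI)
  define P where "P = p ` \<sigma>"
  define q where "q = inv_into \<sigma> p"
  have qP: "q i \<in> \<sigma>" "p (q i) = i" if "i \<in> P" for i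
    using that unfolding P_def q_def by (auto intro: inv_into_into f_inv_into_f)
  have qp: "q (p a) = a" if "a \<in> \<sigma>" for a
    unfolding q_def using pinj that by (rule inv_into_f_f)
  define co where "co a i = t powr (real_of_int (a$i - \<eta>$i))" for a :: "int^'n" and i
  have co_pos: "co a i > 0" for a i unfolding co_def using tp by simp
  have co_le1: "co a i \<le> 1" if "a \<in> \<sigma>" for a i
  proof -
    have "a$i \<le> \<eta>$i" using le that by (simp add: cle_def)
    then have "co a i \<le> t powr 0" unfolding co_def using t1
      by (intro powr_mono) auto
    then show ?thesis using tp by simp
  qed
  have co_p: "co a (p a) = 1" if "a \<in> \<sigma>" for a
    unfolding co_def using pa[OF that] tp by simp
  have co_small: "co a k \<le> 1/t" if "a \<in> \<sigma>" "k \<in> P" "k \<noteq> p a" for a k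
  proof -
    have "a$k \<noteq> \<eta>$k"
    proof
      assume h: "a$k = \<eta>$k"
      have "(q k)$k = \<eta>$k" using pa[OF qP(1)[OF that(2)]] qP(2)[OF that(2)] by simp
      then have "a = q k" using uniq h that(1) qP(1)[OF that(2)] by blast
      then show False using that qP(2) by simp
    qed
    then have "a$k - \<eta>$k \<le> -1" using le that(1) by (simp add: cle_def) (smt (verit))
    then have "co a k \<le> t powr (-1)" unfolding co_def using t1
      by (intro powr_mono) auto
    then show ?thesis using tp by (simp add: powr_neg_one)
  qed
  have co_big: "co b i \<ge> t" if "\<eta>$i < b$i" for b i
  proof -
    have "1 \<le> b$i - \<eta>$i" using that by simp
    then have "t powr 1 \<le> co b i" unfolding co_def using t1
      by (intro powr_mono) auto
    then show ?thesis using tp by simp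
  qed
  define \<epsilon> where "\<epsilon> = 2/t"
  have \<epsilon>: "\<epsilon> > 0" "\<epsilon> \<le> 1" using tp t16 unfolding \<epsilon>_def by (auto simp: divide_le_eq) (smt (verit) zero_le_power2)
  define G where "G c = (\<chi> i. if i \<in> P then c$i else \<epsilon>)" for c :: "real^'n"
  define F where "F c = (\<chi> i. if i\<in>P then 1 - (\<Sum>k\<in>UNIV-{i}. G c $ k * co (q i) k) else \<epsilon>)"
    for c :: "real^'n"
  have cardle: "real (card (UNIV - {i::'n})) \<le> N" for i
    unfolding N_def by (simp add: card_mono)
  have lip: "\<forall>x y. dist (F x) (F y) \<le> (1/2) * dist x y"
  proof (intro allI)
    fix x y :: "real^'n"
    define d where "d = dist x y"
    have d0: "d \<ge> 0" unfolding d_def by simp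
    have comp: "\<bar>(F x - F y)$i\<bar> \<le> N * (d / t)" for i
    proof (cases "i \<in> P")
      case False
      then show ?thesis using d0 N1 tp by (simp add: F_def)
    next
      case True
      have "(F x - F y)$i = (\<Sum>k\<in>UNIV-{i}. (G y $ k - G x $ k) * co (q i) k)"
        using True by (simp add: F_def sum_subtractf[symmetric] algebra_simps)
      also have "\<bar>\<dots>\<bar> \<le> (\<Sum>k\<in>UNIV-{i}. \<bar>(G y $ k - G x $ k) * co (q i) k\<bar>)"
        by (rule sum_abs)
      also have "\<dots> \<le> real (card (UNIV - {i})) * (d / t)"
      proof (rule sum_bounded_above)
        fix k assume k: "k \<in> UNIV - {i}"
        show "\<bar>(G y $ k - G x $ k) * co (q i) k\<bar> \<le> d / t"
        proof (cases "k \<in> P")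
          case False
          then show ?thesis using d0 tp by (simp add: G_def)
        next
          case kP: True
          have "\<bar>y$k - x$k\<bar> \<le> d" unfolding d_def dist_norm
            by (metis component_le_norm_cart norm_minus_commute vector_minus_component)
          moreover have "co (q i) k \<le> 1/t"
            using co_small[OF qP(1)[OF True] kP] qP(2)[OF True] k by simp
          ultimately have "\<bar>y$k - x$k\<bar> * co (q i) k \<le> d * (1/t)"
            using co_pos[of "q i" k] d0 by (intro mult_mono) auto
          then show ?thesis using kP co_pos[of "q i" k] by (simp add: G_def abs_mult)
        qed
      qed
      also have "\<dots> \<le> N * (d / t)"
        using cardle d0 tp by (intro mult_right_mono) auto
      finally show ?thesis .
    qed
    have "dist (F x) (F y) = norm (F x - F y)" by (simp add: dist_norm)
    also have "\<dots> \<le> (\<Sum>i\<in>UNIV. \<bar>(F x - F y)$i\<bar>)" by (rule norm_le_l1_cart)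
    also have "\<dots> \<le> real (card (UNIV::'n set)) * (N * (d / t))"
      by (rule sum_bounded_above) (use comp in auto)
    also have "\<dots> = (N * N / t) * d" unfolding N_def by simp
    also have "\<dots> \<le> (1/2) * d" using NNt d0 by (rule mult_right_mono)
    finally show "dist (F x) (F y) \<le> (1/2) * dist x y" unfolding d_def .
  qed
  obtain c where cF: "F c = c"
    using banach_fix_type[of "1/2" F] lip by auto
  have Gc: "G c = c"
  proof (rule vec_eq_iff[THEN iffD2, rule_format])
    fix i
    show "G c $ i = c $ i"
    proof (cases "i \<in> P")
      case False
      have "c$i = F c $ i" using cF by simp
      then show ?thesis using False by (simp add: G_def F_def)
    qed (simp add: G_def)
  qed
  define S where "S i = (\<Sum>k\<in>UNIV-{i}. c $ k * co (q i) k)" for i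
  have cS: "c$i = 1 - S i" if "i \<in> P" for i
  proof -
    have "c$i = F c $ i" using cF by simp
    then show ?thesis using that Gc by (simp add: F_def S_def)
  qed
  have cnP: "c$i = \<epsilon>" if "i \<notin> P" for i
  proof -
    have "c$i = F c $ i" using cF by simp
    then show ?thesis using that by (simp add: F_def)
  qed
  have Sb: "\<bar>S i\<bar> \<le> N * (\<epsilon> + norm c / t)" if "i \<in> P" for i
  proof -
    have "\<bar>S i\<bar> \<le> (\<Sum>k\<in>UNIV-{i}. \<bar>c $ k * co (q i) k\<bar>)" unfolding S_def by (rule sum_abs)
    also have "\<dots> \<le> real (card (UNIV - {i})) * (\<epsilon> + norm c / t)"
    proof (rule sum_bounded_above)
      fix k assume k: "k \<in> UNIV - {i}"
      show "\<bar>c $ k * co (q i) k\<bar> \<le> \<epsilon> + norm c / t"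
      proof (cases "k \<in> P")
        case False
        have "\<epsilon> * co (q i) k \<le> \<epsilon> * 1"
          using co_le1[OF qP(1)[OF that]] \<epsilon> by (intro mult_left_mono) auto
        moreover have "0 \<le> norm c / t" using tp by simp
        moreover have "\<bar>c $ k * co (q i) k\<bar> = \<epsilon> * co (q i) k"
          using cnP[OF False] co_pos[of "q i" k] \<epsilon> by (simp add: abs_mult)
        ultimately show ?thesis by linarith
      next
        case kP: True
        have "co (q i) k \<le> 1/t"
          using co_small[OF qP(1)[OF that] kP] qP(2)[OF that] k by simp
        then have "\<bar>c$k\<bar> * co (q i) k \<le> norm c * (1/t)"
          using co_pos[of "q i" k] by (intro mult_mono) (auto simp: component_le_norm_cart)
        then show ?thesis using \<epsilon> co_pos[of "q i" k] by (simp add: abs_mult)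
      qed
    qed
    also have "\<dots> \<le> N * (\<epsilon> + norm c / t)"
      using cardle \<epsilon> tp by (intro mult_right_mono) auto
    finally show ?thesis .
  qed
  have cb: "\<bar>c$i\<bar> \<le> 1 + N * (\<epsilon> + norm c / t)" for i
  proof (cases "i \<in> P")
    case True
    then show ?thesis using cS[OF True] Sb[OF True] by linarith
  next
    case False
    have "0 \<le> N * (\<epsilon> + norm c / t)" using N1 \<epsilon> tp by simp
    then show ?thesis using cnP[OF False] \<epsilon> by simp
  qed
  have "norm c \<le> (\<Sum>i\<in>UNIV. \<bar>c$i\<bar>)" by (rule norm_le_l1_cart)
  also have "\<dots> \<le> real (card (UNIV::'n set)) * (1 + N * (\<epsilon> + norm c / t))"
    by (rule sum_bounded_above) (use cb in auto)
  finally have "norm c \<le> N * (1 + N * (2/t + norm c / t))" unfolding N_def \<epsilon>_def .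
  then have nc: "norm c \<le> 2 * N" using arith1[OF N1 t16] by simp
  have cpos: "c$i > 1/t" for i
  proof (cases "i \<in> P")
    case True
    have "1 - N * (2/t + norm c / t) > 1/t" using arith2[OF N1 t16 nc] by simp
    then show ?thesis using cS[OF True] Sb[OF True] unfolding \<epsilon>_def by linarith
  next
    case False
    then show ?thesis using cnP[OF False] tp unfolding \<epsilon>_def by (simp add: divide_strict_right_mono)
  qed
  define w where "w = (\<chi> i. c$i * t powr (- real_of_int (\<eta>$i)))"
  have wE: "w \<bullet> Et t a = (\<Sum>i\<in>UNIV. c$i * co a i)" for a
    unfolding w_def Et_def co_def inner_vec_def
    by (rule sum.cong) (simp_all add: powr_add[symmetric] mult.assoc)
  have cp0: "c$i > 0" for i
  proof -
    have "0 < 1/t" using tp by simp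
    then show ?thesis using cpos[of i] by linarith
  qed
  have "\<forall>i. 0 < w$i" unfolding w_def using cp0 tp by simp
  moreover have "\<forall>a\<in>\<sigma>. w \<bullet> Et t a = 1"
  proof
    fix a assume a: "a \<in> \<sigma>"
    have pP: "p a \<in> P" using a unfolding P_def by simp
    have "w \<bullet> Et t a = c$(p a) * co a (p a) + (\<Sum>k\<in>UNIV-{p a}. c$k * co a k)"
      unfolding wE by (simp add: sum.remove)
    also have "\<dots> = c$(p a) + S (p a)" using co_p[OF a] qp[OF a] by (simp add: S_def)
    also have "\<dots> = 1" using cS[OF pP] by simp
    finally show "w \<bullet> Et t a = 1" .
  qed
  moreover have "\<forall>b\<in>A-\<sigma>. w \<bullet> Et t b > 1"
  proof
    fix b assume b: "b \<in> A - \<sigma>"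
    then have "\<not> cle b \<eta>" using below by blast
    then obtain i where i: "\<eta>$i < b$i" unfolding cle_def by (meson not_le)
    have "c$i * co b i \<le> (\<Sum>i\<in>UNIV. c$i * co b i)"
      by (intro member_le_sum) (simp_all add: cp0 co_pos less_imp_le)
    moreover have "c$i * co b i \<ge> c$i * t" using co_big[OF i] cp0[of i]
      by (intro mult_left_mono) simp_all
    moreover have "c$i * t > (1/t) * t" using cpos[of i] tp by (intro mult_strict_right_mono) auto
    ultimately show "w \<bullet> Et t b > 1" using tp wE by simp
  qed
  ultimately show ?thesis by blast
qed


lemma single:
  fixes A :: "(int ^ 'n) set"
  assumes gen: "generic A" and t: "t \<ge> 16 * real CARD('n)^2 + 2" and sig: "\<sigma> \<in> NA A"
  shows "(convex hull (Et t ` \<sigma>)) face_of (Pt t A) \<and> inj_on (Et t) \<sigma> \<and> \<sigma> \<in> hull_t t A"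
proof -
  have sn: "strongly_neighborly A \<sigma>" using sig by (simp add: NA_def)
  have fin: "finite \<sigma>" and sub: "\<sigma> \<subseteq> A" using sn by (auto simp: strongly_neighborly_def)
  obtain w :: "real^'n" where w: "\<forall>i. 0 < w$i" "\<forall>a\<in>\<sigma>. w \<bullet> Et t a = 1" "\<forall>b\<in>A-\<sigma>. w \<bullet> Et t b > 1"
    using exists_w[OF fin _ _ _ _ t, of "vee \<sigma>" A] sn_le[OF sn] sn_below[OF sn] sn_touch[OF sn]
      sn_uniq[OF gen sn] by blast
  have face: "convex hull (Et t ` \<sigma>) face_of Pt t A" using face_from_w[OF w sub] .
  have "0 \<le> real CARD('n)^2" by simp
  then have t1: "t > 1" using t by linarith
  have inj: "inj_on (Et t) \<sigma>"
  proof (rule inj_onI)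
    fix a b assume "a \<in> \<sigma>" "b \<in> \<sigma>" "Et t a = Et t b"
    then have "\<forall>i. t powr real_of_int (a$i) = t powr real_of_int (b$i)"
      unfolding Et_def by (metis vec_lambda_beta)
    then have "\<forall>i. a$i = b$i" using t1 powr_inj[of t] by simp
    then show "a = b" by (simp add: vec_eq_iff)
  qed
  show ?thesis using face inj sub by (simp add: hull_t_def)
qed

theorem mainTheorem2:
  fixes L A :: "(int ^ 'n) set"
  assumes "antichain_lattice L"
    and "generic A"
    and "lattice_finite L A"
  shows "\<exists>t0>1. \<forall>t\<ge>t0. \<forall>\<sigma>\<in>NA A.
           (convex hull (Et t ` \<sigma>)) face_of (Pt t A) \<and> inj_on (Et t) \<sigma> \<and>
           \<sigma> \<in> hull_t t A"
proof -
  have "0 \<le> real CARD('n)^2" by simp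
  then have "16 * real CARD('n)^2 + 2 > 1" by linarith
  then show ?thesis using single[OF assms(2)] by blast
qed

end
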